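(* Let $\gamma\in(0,2]$ and let $X=\theta^*+Z$ with $Z_1,\dots,Z_n$ i.i.d. with density $p_\gamma(x)\propto\exp(-|x|^\gamma)$. Then there is a universal constant $c>0$ such that $$\inf_{\widehat{\theta}}\sup_{\theta^*\in\Theta_3}\mathbb{E}\|\widehat{\theta}-\theta^*\|^2\geq c\{\log (en)\}^{2/\gamma},$$ where the infimum is over all measurable functions of $X$.
   Context: For reals $a\le b$, $(a:b]$ is the set of integers $i$ with $a<i\le b$. $\Theta_3$ is the set of $\theta\in\mathbb{R}^n$ for which there exist integers $0=a_0\le a_1\le a_2\le a_3=n$ and reals $\mu_1,\mu_2,\mu_3$ with $\theta_i=\mu_j$ for all $i\in(a_{j-1}:a_j]$. *)

theory Defs
  imports "HOL-Analysis.Analysis"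
begin

text \<open>Vectors in R^n are functions nat => real, indexed by {1..n}, extensional outside.\<close>

definition Theta3 :: "nat \<Rightarrow> (nat \<Rightarrow> real) set" where
  "Theta3 n = {\<theta> \<in> extensional {1..n}.
     \<exists>(a :: nat \<Rightarrow> nat) (\<mu> :: nat \<Rightarrow> real).
        a 0 = 0 \<and> a 0 \<le> a 1 \<and> a 1 \<le> a 2 \<and> a 2 \<le> a 3 \<and> a 3 = n \<and>
        (\<forall>j\<in>{1..3}. \<forall>i\<in>{a (j - 1)<..a j}. \<theta> i = \<mu> j)}"

definition p_gamma :: "real \<Rightarrow> real \<Rightarrow> real" where
  "p_gamma \<gamma> x = exp (- (\<bar>x\<bar> powr \<gamma>)) / (LBINT t. exp (- (\<bar>t\<bar> powr \<gamma>)))"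

definition noise :: "real \<Rightarrow> nat \<Rightarrow> (nat \<Rightarrow> real) measure" where
  "noise \<gamma> n = PiM {1..n} (\<lambda>_. density lborel (\<lambda>x. ennreal (p_gamma \<gamma> x)))"

definition shift :: "nat \<Rightarrow> (nat \<Rightarrow> real) \<Rightarrow> (nat \<Rightarrow> real) \<Rightarrow> (nat \<Rightarrow> real)" where
  "shift n \<theta> z = (\<lambda>i\<in>{1..n}. \<theta> i + z i)"

definition risk :: "real \<Rightarrow> nat \<Rightarrow> ((nat \<Rightarrow> real) \<Rightarrow> (nat \<Rightarrow> real)) \<Rightarrow> (nat \<Rightarrow> real) \<Rightarrow> ennreal" where
  "risk \<gamma> n est \<theta> = (\<integral>\<^sup>+ z. ennreal (\<Sum>i\<in>{1..n}. (est (shift n \<theta> z) i - \<theta> i)\<^sup>2) \<partial>noise \<gamma> n)"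

end

theory Submission
  imports Defs "HOL-Probability.Probability"
begin

lemma exp_neg_powr_bound:
  fixes \<gamma> t :: real and m :: nat
  assumes g: "0 < \<gamma>" and m: "1 \<le> m" and gm: "2 \<le> \<gamma> * real m" and t: "1 \<le> \<bar>t\<bar>"
  shows "exp (- (\<bar>t\<bar> powr \<gamma>)) \<le> real m ^ m / t\<^sup>2"
proof -
  define s where "s = \<bar>t\<bar> powr \<gamma>"
  have s1: "1 \<le> s" unfolding s_def using t g by (simp add: ge_one_powr_ge_zero)
  have mpos: "0 < real m" using m by simp
  have "exp s = exp (s / real m) ^ m"
    using mpos by (simp add: exp_of_nat_mult[symmetric])
  moreover have "s / real m \<le> exp (s / real m)"
    using exp_ge_add_one_self[of "s / real m"] by linarith
  ultimately have e1: "(s / real m) ^ m \<le> exp s"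
    using s1 mpos by (metis divide_nonneg_pos less_le_trans zero_less_one less_imp_le power_mono)
  have sm: "s ^ m = \<bar>t\<bar> powr (\<gamma> * real m)"
    unfolding s_def using t by (simp add: powr_powr powr_realpow[symmetric])
  have "\<bar>t\<bar> powr 2 \<le> \<bar>t\<bar> powr (\<gamma> * real m)"
    using t gm by (intro powr_mono) auto
  hence t2: "t\<^sup>2 \<le> s ^ m" using sm t by (simp add: powr_realpow[symmetric])
  have tpos: "0 < t\<^sup>2" using t by auto
  have "exp (- s) = 1 / exp s" by (simp add: exp_minus field_simps)
  also have "\<dots> \<le> 1 / ((s / real m) ^ m)"
    using e1 s1 mpos by (intro divide_left_mono) auto
  also have "\<dots> = real m ^ m / s ^ m" by (simp add: power_divide)
  also have "\<dots> \<le> real m ^ m / t\<^sup>2"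
  proof (rule divide_left_mono)
    have "0 < s ^ m" using s1 by simp
    thus "0 < s ^ m * t\<^sup>2" using tpos by (intro mult_pos_pos) auto
  qed (use t2 tpos in auto)
  finally show ?thesis unfolding s_def .
qed

lemma tail_right:
  fixes a :: real assumes a: "0 < a"
  shows "(\<integral>\<^sup>+ t. ennreal (indicator {a..} t * (1 / t ^ 2)) \<partial>lborel) = ennreal (1 / a)"
proof -
  have "((\<lambda>x. 1 / x ^ 2) has_integral 1 / (real (2 - 1) * a ^ (2 - 1))) {a..}"
    using a by (intro has_integral_inverse_power_to_inf) auto
  hence "((\<lambda>x. 1 / x ^ 2) has_integral 1 / a) {a..}" by simp
  from nn_integral_has_integral_lebesgue[OF _ this] show ?thesis by simp
qed

lemma tail_both:
  fixes a :: real assumes a: "0 < a"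
  shows "(\<integral>\<^sup>+ t. ennreal (indicator {t. a \<le> \<bar>t\<bar>} t * (1 / t ^ 2)) \<partial>lborel) = ennreal (2 / a)"
proof -
  define f where "f x = indicator {a..} x * (1 / x ^ 2)" for x :: real
  have fm[measurable]: "f \<in> borel_measurable borel" unfolding f_def by measurable
  have eq: "indicator {t. a \<le> \<bar>t\<bar>} t * (1 / t ^ 2) = f t + f (-t)" for t
    using a unfolding f_def by (auto simp: indicator_def)
  have neg: "(\<integral>\<^sup>+ t. ennreal (f (-t)) \<partial>lborel) = (\<integral>\<^sup>+ t. ennreal (f t) \<partial>lborel)"
    using nn_integral_real_affine[of "\<lambda>x. ennreal (f x)" "-1" 0] by simp
  have "(\<integral>\<^sup>+ t. ennreal (indicator {t. a \<le> \<bar>t\<bar>} t * (1 / t ^ 2)) \<partial>lborel)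
      = (\<integral>\<^sup>+ t. ennreal (f t) + ennreal (f (-t)) \<partial>lborel)"
    unfolding eq by (intro nn_integral_cong) (auto simp: f_def intro!: ennreal_plus)
  also have "\<dots> = (\<integral>\<^sup>+ t. ennreal (f t) \<partial>lborel) + (\<integral>\<^sup>+ t. ennreal (f (-t)) \<partial>lborel)"
    by (intro nn_integral_add) auto
  also have "\<dots> = ennreal (2 / a)" unfolding neg using tail_right[OF a] a
    by (simp add: f_def ennreal_plus[symmetric] del: ennreal_plus)
  finally show ?thesis .
qed

lemma F_le:
  fixes \<gamma> :: real assumes g: "0 < \<gamma>"
  obtains K :: real where "0 \<le> K" "\<And>t. exp (- (\<bar>t\<bar> powr \<gamma>)) \<le> indicator {-1..1} t + K * (indicator {t. 1 \<le> \<bar>t\<bar>} t * (1 / t ^ 2))"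
proof -
  define m where "m = nat \<lceil>2 / \<gamma>\<rceil>"
  have "0 < \<lceil>2 / \<gamma>\<rceil>" using g by simp
  hence "1 \<le> \<lceil>2 / \<gamma>\<rceil>" by linarith
  hence m1: "1 \<le> m" unfolding m_def using nat_mono by fastforce
  have gm: "2 \<le> \<gamma> * real m"
  proof -
    have "2 / \<gamma> \<le> real m" unfolding m_def by linarith
    thus ?thesis using g by (simp add: field_simps)
  qed
  show ?thesis
  proof (rule that[of "real m ^ m"])
    fix t :: real
    show "exp (- (\<bar>t\<bar> powr \<gamma>)) \<le> indicator {-1..1} t + real m ^ m * (indicator {t. 1 \<le> \<bar>t\<bar>} t * (1 / t ^ 2))"
    proof (cases "1 \<le> \<bar>t\<bar>")
      case True
      have "exp (- (\<bar>t\<bar> powr \<gamma>)) \<le> real m ^ m / t\<^sup>2"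
        by (rule exp_neg_powr_bound[OF g m1 gm True])
      moreover have "(0::real) \<le> indicator {-1..1} t" by simp
      ultimately show ?thesis using True by (simp add: indicator_def)
    next
      case False
      hence "t \<in> {-1..1}" by auto
      thus ?thesis using False by (simp add: indicator_def)
    qed
  qed simp
qed

lemma F_integrable:
  fixes \<gamma> :: real assumes g: "0 < \<gamma>"
  shows "integrable lborel (\<lambda>t. exp (- (\<bar>t\<bar> powr \<gamma>)))"
proof (rule integrableI_bounded)
  obtain K where K: "0 \<le> K" "\<And>t. exp (- (\<bar>t\<bar> powr \<gamma>)) \<le> indicator {-1..1} t + K * (indicator {t. 1 \<le> \<bar>t\<bar>} t * (1 / t ^ 2))"
    using F_le[OF g] by blast
  have "(\<integral>\<^sup>+ t. ennreal (norm (exp (- (\<bar>t\<bar> powr \<gamma>)))) \<partial>lborel)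
     \<le> (\<integral>\<^sup>+ t. ennreal (indicator {-1..1} t) + ennreal K * ennreal (indicator {t. 1 \<le> \<bar>t\<bar>} t * (1 / t ^ 2)) \<partial>lborel)"
    using K by (intro nn_integral_mono) (simp add: ennreal_plus[symmetric] ennreal_mult[symmetric] del: ennreal_plus)
  also have "\<dots> = (\<integral>\<^sup>+ t. ennreal (indicator {-1..1} (t::real)) \<partial>lborel) + ennreal K * (\<integral>\<^sup>+ t. ennreal (indicator {t. 1 \<le> \<bar>t\<bar>} t * (1 / t ^ 2)) \<partial>lborel)"
    apply (subst nn_integral_add)
      apply simp
     apply simp
    apply (subst nn_integral_cmult)
     apply simp
    apply simp
    done
  also have "\<dots> < \<infinity>"
  proof -
    have "(\<integral>\<^sup>+ t. ennreal (indicator {-1..1} (t::real)) \<partial>lborel) = emeasure lborel {-1..(1::real)}"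
      by (simp add: ennreal_indicator)
    also have "\<dots> = 2" by simp
    finally have 1: "(\<integral>\<^sup>+ t. ennreal (indicator {-1..1} (t::real)) \<partial>lborel) = 2" .
    have T: "(\<integral>\<^sup>+ t. ennreal (indicator {t. 1 \<le> \<bar>t\<bar>} t * (1 / t ^ 2)) \<partial>lborel) = ennreal 2"
      using tail_both[of 1] by simp
    show ?thesis unfolding 1 T
      using K(1) by (simp add: ennreal_mult[symmetric] ennreal_plus[symmetric] del: ennreal_plus ennreal_numeral)
  qed
  finally show "(\<integral>\<^sup>+ t. ennreal (norm (exp (- (\<bar>t\<bar> powr \<gamma>)))) \<partial>lborel) < \<infinity>" .
qed simp

lemma C_lower:
  fixes \<gamma> :: real assumes g: "0 < \<gamma>"
  shows "2 * exp (-1) \<le> (LBINT t. exp (- (\<bar>t\<bar> powr \<gamma>)))"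
proof -
  have "(\<integral>\<^sup>+ t. ennreal (exp (-1)) * indicator {-1..1} (t::real) \<partial>lborel) = ennreal (exp (-1)) * emeasure lborel {-1..(1::real)}"
    by (subst nn_integral_cmult_indicator) (auto simp: emeasure_lborel_Icc)
  hence "ennreal (2 * exp (-1)) = (\<integral>\<^sup>+ t. ennreal (exp (-1)) * indicator {-1..1} (t::real) \<partial>lborel)"
    using ennreal_mult[of 2 "exp(-1)"] by (simp add: mult.commute)
  also have "\<dots> \<le> (\<integral>\<^sup>+ t. ennreal (exp (- (\<bar>t\<bar> powr \<gamma>))) \<partial>lborel)"
  proof (intro nn_integral_mono)
    fix t :: real
    show "ennreal (exp (-1)) * indicator {-1..1} t \<le> ennreal (exp (- (\<bar>t\<bar> powr \<gamma>)))"
    proof (cases "t \<in> {-1..1}")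
      case True
      hence "\<bar>t\<bar> powr \<gamma> \<le> 1" using g powr_mono2[of \<gamma> "\<bar>t\<bar>" 1] by auto
      thus ?thesis using True by (simp add: indicator_def)
    next
      case False thus ?thesis by simp
    qed
  qed
  also have "\<dots> = ennreal (LBINT t. exp (- (\<bar>t\<bar> powr \<gamma>)))"
    by (rule nn_integral_eq_integral[OF F_integrable[OF g]]) simp
  finally show ?thesis by (subst (asm) ennreal_le_iff) auto
qed

lemma shift_bound:
  fixes p :: "real \<Rightarrow> real" and g :: "real \<Rightarrow> ennreal" and E :: "real set"
  assumes pm[measurable]: "p \<in> borel_measurable borel" and gm[measurable]: "g \<in> borel_measurable borel"
    and Em[measurable]: "E \<in> sets borel"
    and g1: "\<And>x. g x \<le> 1" and M: "0 \<le> M"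
    and r: "\<And>y. p (y - \<delta>) \<le> M * p y + p (y - \<delta>) * indicator E (y - \<delta>)"
    and p0: "\<And>x. 0 \<le> p x"
  shows "(\<integral>\<^sup>+y. g (y + \<delta>) \<partial>density lborel p) \<le> ennreal M * (\<integral>\<^sup>+y. g y \<partial>density lborel p) + emeasure (density lborel p) E"
proof -
  have tr: "(\<integral>\<^sup>+x. f x \<partial>lborel) = (\<integral>\<^sup>+x. f (\<delta> + x) \<partial>lborel)" if [measurable]: "f \<in> borel_measurable borel" for f :: "real \<Rightarrow> ennreal"
    using nn_integral_real_affine[of f 1 \<delta>] by simp
  have "(\<integral>\<^sup>+y. g (y + \<delta>) \<partial>density lborel p) = (\<integral>\<^sup>+y. ennreal (p y) * g (y + \<delta>) \<partial>lborel)"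
    by (simp add: nn_integral_density)
  also have "\<dots> = (\<integral>\<^sup>+y. ennreal (p (y - \<delta>)) * g y \<partial>lborel)"
    by (subst tr) (auto simp: add.commute)
  also have "\<dots> \<le> (\<integral>\<^sup>+y. ennreal M * (ennreal (p y) * g y) + ennreal (p (y - \<delta>) * indicator E (y - \<delta>)) \<partial>lborel)"
  proof (rule nn_integral_mono)
    fix y :: real
    have "ennreal (p (y - \<delta>)) * g y \<le> ennreal (M * p y + p (y - \<delta>) * indicator E (y - \<delta>)) * g y"
      using r[of y] by (intro mult_right_mono ennreal_leI) auto
    also have "\<dots> = ennreal M * (ennreal (p y) * g y) + ennreal (p (y - \<delta>) * indicator E (y - \<delta>)) * g y"
      using M p0 by (simp add: ennreal_plus ennreal_mult distrib_right mult.assoc)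
    also have "\<dots> \<le> ennreal M * (ennreal (p y) * g y) + ennreal (p (y - \<delta>) * indicator E (y - \<delta>))"
      using g1[of y] by (intro add_left_mono) (metis mult.right_neutral mult_left_mono zero_le)
    finally show "ennreal (p (y - \<delta>)) * g y \<le> ennreal M * (ennreal (p y) * g y) + ennreal (p (y - \<delta>) * indicator E (y - \<delta>))" .
  qed
  also have "\<dots> = ennreal M * (\<integral>\<^sup>+y. ennreal (p y) * g y \<partial>lborel) + (\<integral>\<^sup>+y. ennreal (p (y - \<delta>) * indicator E (y - \<delta>)) \<partial>lborel)"
    by (subst nn_integral_add) (auto simp: nn_integral_cmult)
  also have "(\<integral>\<^sup>+y. ennreal (p (y - \<delta>) * indicator E (y - \<delta>)) \<partial>lborel) = (\<integral>\<^sup>+y. ennreal (p y * indicator E y) \<partial>lborel)"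
    by (subst tr) auto
  also have "\<dots> = emeasure (density lborel p) E"
    by (subst emeasure_density) (auto intro!: nn_integral_cong simp: indicator_def)
  also have "(\<integral>\<^sup>+y. ennreal (p y) * g y \<partial>lborel) = (\<integral>\<^sup>+y. g y \<partial>density lborel p)"
    by (simp add: nn_integral_density)
  finally show ?thesis .
qed

lemma prod_shift_bound:
  fixes \<mu> :: "real measure" and H :: "(nat \<Rightarrow> real) \<Rightarrow> ennreal" and I :: "nat set"
  assumes P: "prob_space \<mu>" and S: "sets \<mu> = sets borel" and I: "finite I" "k \<in> I"
    and Hm: "H \<in> borel_measurable (PiM I (\<lambda>_. \<mu>))" and H1: "\<And>x. H x \<le> 1"
    and one: "\<And>g. g \<in> borel_measurable \<mu> \<Longrightarrow> (\<And>x. g x \<le> 1) \<Longrightarrow>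
                 (\<integral>\<^sup>+y. g (y + \<delta>) \<partial>\<mu>) \<le> ennreal M * (\<integral>\<^sup>+y. g y \<partial>\<mu>) + q"
  shows "(\<integral>\<^sup>+z. H (z(k := z k + \<delta>)) \<partial>PiM I (\<lambda>_. \<mu>)) \<le> ennreal M * (\<integral>\<^sup>+z. H z \<partial>PiM I (\<lambda>_. \<mu>)) + q"
proof -
  interpret P: prob_space \<mu> by (rule P)
  interpret PP: product_prob_space "\<lambda>_::nat. \<mu>" by unfold_locales
  define J where "J = I - {k}"
  have IJ: "I = insert k J" "k \<notin> J" "finite J" using I unfolding J_def by auto
  interpret PJ: prob_space "PiM J (\<lambda>_. \<mu>)" by (rule prob_space_PiM) (simp add: P)
  have Hm': "H \<in> borel_measurable (PiM (insert k J) (\<lambda>_. \<mu>))" using Hm IJ by simp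
  have Hs: "(\<lambda>z. H (z(k := z k + \<delta>))) \<in> borel_measurable (PiM (insert k J) (\<lambda>_. \<mu>))"
  proof -
    have "(\<lambda>z. z(k := z k + \<delta>)) \<in> PiM (insert k J) (\<lambda>_. \<mu>) \<rightarrow>\<^sub>M PiM (insert k J) (\<lambda>_. \<mu>)"
    proof (rule measurable_PiM_single')
      fix i assume i: "i \<in> insert k J"
      show "(\<lambda>z. (z(k := z k + \<delta>)) i) \<in> PiM (insert k J) (\<lambda>_. \<mu>) \<rightarrow>\<^sub>M \<mu>"
      proof (cases "i = k")
        case True
        have "(\<lambda>z. z k + \<delta>) \<in> PiM (insert k J) (\<lambda>_. \<mu>) \<rightarrow>\<^sub>M \<mu>"
        proof -
          have c[measurable]: "(\<lambda>z. z k) \<in> borel_measurable (PiM (insert k J) (\<lambda>_. \<mu>))"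
            using measurable_component_singleton[of k "insert k J" "\<lambda>_. \<mu>"]
            by (simp add: measurable_cong_sets[OF refl S])
          have "(\<lambda>z. z k + \<delta>) \<in> borel_measurable (PiM (insert k J) (\<lambda>_. \<mu>))" by measurable
          thus ?thesis by (simp add: measurable_cong_sets[OF refl S])
        qed
        then show ?thesis using True by simp
      next
        case False
        then show ?thesis using measurable_component_singleton[OF i, of "\<lambda>_. \<mu>"] by simp
      qed
    next
      show "(\<lambda>z. z(k := z k + \<delta>)) \<in> space (PiM (insert k J) (\<lambda>_. \<mu>)) \<rightarrow> (\<Pi>\<^sub>E i\<in>insert k J. space \<mu>)"
        using sets_eq_imp_space_eq[OF S] by (auto simp: space_PiM PiE_def extensional_def Pi_def)
    qed
    thus ?thesis using Hm' by (rule measurable_compose)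
  qed
  have inner_m: "(\<lambda>x. \<integral>\<^sup>+y. H (x(k := y)) \<partial>\<mu>) \<in> borel_measurable (PiM J (\<lambda>_. \<mu>))"
    using P.borel_measurable_nn_integral_fst[OF measurable_compose[OF measurable_add_dim Hm']] by simp
  have "(\<integral>\<^sup>+z. H (z(k := z k + \<delta>)) \<partial>PiM I (\<lambda>_. \<mu>))
      = (\<integral>\<^sup>+x. (\<integral>\<^sup>+y. H (x(k := y + \<delta>)) \<partial>\<mu>) \<partial>PiM J (\<lambda>_. \<mu>))"
    unfolding IJ(1) by (subst PP.product_nn_integral_insert[OF IJ(3,2) Hs]) simp
  also have "\<dots> \<le> (\<integral>\<^sup>+x. ennreal M * (\<integral>\<^sup>+y. H (x(k := y)) \<partial>\<mu>) + q \<partial>PiM J (\<lambda>_. \<mu>))"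
  proof (rule nn_integral_mono)
    fix x assume x: "x \<in> space (PiM J (\<lambda>_. \<mu>))"
    have gm: "(\<lambda>y. H (x(k := y))) \<in> borel_measurable \<mu>"
      using measurable_compose[OF measurable_component_update[OF x IJ(2)] Hm'] .
    show "(\<integral>\<^sup>+y. H (x(k := y + \<delta>)) \<partial>\<mu>) \<le> ennreal M * (\<integral>\<^sup>+y. H (x(k := y)) \<partial>\<mu>) + q"
      using one[OF gm H1] .
  qed
  also have "\<dots> = ennreal M * (\<integral>\<^sup>+x. (\<integral>\<^sup>+y. H (x(k := y)) \<partial>\<mu>) \<partial>PiM J (\<lambda>_. \<mu>)) + q"
    using inner_m by (subst nn_integral_add) (auto simp: nn_integral_cmult PJ.emeasure_space_1)
  also have "(\<integral>\<^sup>+x. (\<integral>\<^sup>+y. H (x(k := y)) \<partial>\<mu>) \<partial>PiM J (\<lambda>_. \<mu>)) = (\<integral>\<^sup>+z. H z \<partial>PiM I (\<lambda>_. \<mu>))"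
    unfolding IJ(1) by (subst PP.product_nn_integral_insert[OF IJ(3,2) Hm']) simp
  finally show ?thesis .
qed

lemma powr_subadd:
  fixes a b \<gamma> :: real
  assumes a: "0 \<le> a" and b: "0 \<le> b" and g: "0 < \<gamma>" "\<gamma> \<le> 1"
  shows "(a + b) powr \<gamma> \<le> a powr \<gamma> + b powr \<gamma>"
proof (cases "a + b = 0")
  case True
  hence "a = 0" "b = 0" using a b by auto
  thus ?thesis by simp
next
  case False
  define s where "s = a + b"
  have s: "0 < s" using False a b unfolding s_def by simp
  have key: "s powr \<gamma> * (x / s) \<le> x powr \<gamma>" if x: "0 \<le> x" "x \<le> s" for x
  proof -
    have "(x / s) powr 1 \<le> (x / s) powr \<gamma>"
      using x s g by (intro powr_mono') (auto simp: field_simps)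
    hence "x / s \<le> (x / s) powr \<gamma>" using x s by simp
    hence "s powr \<gamma> * (x / s) \<le> s powr \<gamma> * (x / s) powr \<gamma>"
      by (intro mult_left_mono) auto
    also have "\<dots> = (s * (x / s)) powr \<gamma>" using x s by (subst powr_mult) auto
    also have "\<dots> = x powr \<gamma>" using s by simp
    finally show ?thesis .
  qed
  have "s powr \<gamma> = s powr \<gamma> * (a / s) + s powr \<gamma> * (b / s)"
    using s unfolding s_def by (simp add: field_simps add_divide_distrib[symmetric])
  also have "\<dots> \<le> a powr \<gamma> + b powr \<gamma>"
    using key[of a] key[of b] a b unfolding s_def by (intro add_mono) auto
  finally show ?thesis unfolding s_def .
qed

definition Cg :: "real \<Rightarrow> real" where "Cg \<gamma> = (LBINT t. exp (- (\<bar>t\<bar> powr \<gamma>)))"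

lemma Cg_pos: "0 < \<gamma> \<Longrightarrow> 0 < Cg \<gamma>"
  using C_lower[of \<gamma>] unfolding Cg_def by (smt (verit) exp_gt_zero)

lemma p_eq: "p_gamma \<gamma> x = exp (- (\<bar>x\<bar> powr \<gamma>)) / Cg \<gamma>"
  unfolding p_gamma_def Cg_def ..

lemma p_nonneg: "0 < \<gamma> \<Longrightarrow> 0 \<le> p_gamma \<gamma> x"
  using Cg_pos[of \<gamma>] unfolding p_eq by simp

lemma p_meas[measurable]: "p_gamma \<gamma> \<in> borel_measurable borel"
  unfolding p_gamma_def by measurable

lemma ratio1:
  assumes g: "0 < \<gamma>" "\<gamma> \<le> 1" and d: "0 \<le> \<delta>"
  shows "p_gamma \<gamma> (y - \<delta>) \<le> exp (\<delta> powr \<gamma>) * p_gamma \<gamma> y"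
proof -
  have "\<bar>y\<bar> powr \<gamma> \<le> (\<bar>y - \<delta>\<bar> + \<delta>) powr \<gamma>"
    using g d by (intro powr_mono2) auto
  also have "\<dots> \<le> \<bar>y - \<delta>\<bar> powr \<gamma> + \<delta> powr \<gamma>"
    using g d by (intro powr_subadd) auto
  finally have "- (\<bar>y - \<delta>\<bar> powr \<gamma>) \<le> \<delta> powr \<gamma> + - (\<bar>y\<bar> powr \<gamma>)" by simp
  hence "exp (- (\<bar>y - \<delta>\<bar> powr \<gamma>)) \<le> exp (\<delta> powr \<gamma>) * exp (- (\<bar>y\<bar> powr \<gamma>))"
    by (simp add: exp_add[symmetric])
  thus ?thesis using Cg_pos[OF g(1)] unfolding p_eq by (simp add: divide_right_mono)
qed

lemma ratio2:
  assumes g: "0 < \<gamma>" and d: "0 \<le> \<delta>" and y: "\<bar>y - \<delta>\<bar> \<le> \<delta>"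
  shows "p_gamma \<gamma> (y - \<delta>) \<le> exp ((2 * \<delta>) powr \<gamma>) * p_gamma \<gamma> y"
proof -
  have "\<bar>y\<bar> powr \<gamma> \<le> (2 * \<delta>) powr \<gamma>"
    using g d y by (intro powr_mono2) auto
  hence "- (\<bar>y - \<delta>\<bar> powr \<gamma>) \<le> (2 * \<delta>) powr \<gamma> + - (\<bar>y\<bar> powr \<gamma>)"
    using powr_ge_zero[of "\<bar>y - \<delta>\<bar>" \<gamma>] by linarith
  hence "exp (- (\<bar>y - \<delta>\<bar> powr \<gamma>)) \<le> exp ((2 * \<delta>) powr \<gamma>) * exp (- (\<bar>y\<bar> powr \<gamma>))"
    by (simp add: exp_add[symmetric])
  thus ?thesis using Cg_pos[OF g(1)] unfolding p_eq by (simp add: divide_right_mono)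
qed

lemma mu_prob:
  assumes g: "0 < \<gamma>"
  shows "prob_space (density lborel (\<lambda>x. ennreal (p_gamma \<gamma> x)))"
proof (rule prob_spaceI)
  have C: "0 < Cg \<gamma>" by (rule Cg_pos[OF g])
  have "emeasure (density lborel (\<lambda>x. ennreal (p_gamma \<gamma> x))) UNIV = (\<integral>\<^sup>+x. ennreal (exp (- (\<bar>x\<bar> powr \<gamma>))) * ennreal (1 / Cg \<gamma>) \<partial>lborel)"
    using C by (subst emeasure_density) (auto intro!: nn_integral_cong simp: p_eq ennreal_mult[symmetric])
  also have "\<dots> = ennreal (Cg \<gamma>) * ennreal (1 / Cg \<gamma>)"
    by (subst nn_integral_multc) (auto simp: Cg_def nn_integral_eq_integral[OF F_integrable[OF g]])
  also have "\<dots> = 1" using C by (simp add: ennreal_mult[symmetric])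
  finally show "emeasure (density lborel (\<lambda>x. ennreal (p_gamma \<gamma> x))) (space (density lborel (\<lambda>x. ennreal (p_gamma \<gamma> x)))) = 1"
    by simp
qed

lemma tail_mu:
  assumes g: "1 \<le> \<gamma>" and d: "1 \<le> \<delta>"
  shows "emeasure (density lborel (\<lambda>x. ennreal (p_gamma \<gamma> x))) {t. \<delta> < \<bar>t\<bar>} \<le> ennreal (4 * exp 1 / \<delta>)"
proof -
  have g0: "0 < \<gamma>" using g by simp
  have C: "2 * exp (-1) \<le> Cg \<gamma>" using C_lower[OF g0] unfolding Cg_def .
  have Cp: "0 < Cg \<gamma>" by (rule Cg_pos[OF g0])
  have "emeasure (density lborel (\<lambda>x. ennreal (p_gamma \<gamma> x))) {t. \<delta> < \<bar>t\<bar>}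
      = (\<integral>\<^sup>+x. ennreal (p_gamma \<gamma> x) * indicator {t. \<delta> < \<bar>t\<bar>} x \<partial>lborel)"
    by (subst emeasure_density) auto
  also have "\<dots> \<le> (\<integral>\<^sup>+x. ennreal (4 / Cg \<gamma>) * ennreal (indicator {t. \<delta> \<le> \<bar>t\<bar>} x * (1 / x ^ 2)) \<partial>lborel)"
  proof (rule nn_integral_mono)
    fix x :: real
    show "ennreal (p_gamma \<gamma> x) * indicator {t. \<delta> < \<bar>t\<bar>} x \<le> ennreal (4 / Cg \<gamma>) * ennreal (indicator {t. \<delta> \<le> \<bar>t\<bar>} x * (1 / x ^ 2))"
    proof (cases "\<delta> < \<bar>x\<bar>")
      case True
      have "exp (- (\<bar>x\<bar> powr \<gamma>)) \<le> real 2 ^ 2 / x\<^sup>2"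
        using True d g by (intro exp_neg_powr_bound) auto
      hence "p_gamma \<gamma> x \<le> 4 / Cg \<gamma> * (1 / x ^ 2)"
        using Cp unfolding p_eq by (simp add: divide_right_mono field_simps)
      thus ?thesis using True Cp by (simp add: ennreal_mult[symmetric] ennreal_leI)
    next
      case False thus ?thesis by simp
    qed
  qed
  also have "\<dots> = ennreal (4 / Cg \<gamma>) * ennreal (2 / \<delta>)"
  proof -
    have T: "(\<integral>\<^sup>+x. ennreal (indicator {t. \<delta> \<le> \<bar>t\<bar>} x * (1 / x ^ 2)) \<partial>lborel) = ennreal (2 / \<delta>)"
      using tail_both[of \<delta>] d by simp
    show ?thesis
      apply (subst nn_integral_cmult)
       apply measurable
      apply (subst T)
      apply (rule refl)
      done
  qed
  also have "\<dots> \<le> ennreal (4 * exp 1 / \<delta>)"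
  proof -
    have "4 / Cg \<gamma> * (2 / \<delta>) \<le> 4 * exp 1 / \<delta>"
    proof -
      have "1 / Cg \<gamma> \<le> exp 1 / 2"
        using C Cp by (simp add: field_simps exp_minus)
      hence "4 / Cg \<gamma> * (2 / \<delta>) \<le> 4 * (exp 1 / 2) * (2 / \<delta>)"
        using d by (intro mult_right_mono) (auto simp: field_simps)
      thus ?thesis by simp
    qed
    thus ?thesis using Cp d by (simp add: ennreal_mult[symmetric] ennreal_leI)
  qed
  finally show ?thesis .
qed

lemma core_arith:
  fixes R :: ennreal and a b :: "nat \<Rightarrow> ennreal" and D M q :: real and n :: nat
  assumes n: "1 \<le> n" and D: "0 \<le> D" and M: "0 \<le> M" and q: "0 \<le> q"
    and A: "ennreal D * (\<Sum>k\<in>{1..n}. a k) \<le> R"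
    and B: "\<And>k. k \<in> {1..n} \<Longrightarrow> ennreal D \<le> ennreal D * b k + R"
    and Cc: "\<And>k. k \<in> {1..n} \<Longrightarrow> b k \<le> ennreal M * a k + ennreal q"
  shows "ennreal (D * (1 - q) * real n / (real n + M)) \<le> R"
proof (cases "R = \<top>")
  case True thus ?thesis by simp
next
  case False
  then obtain r where r: "R = ennreal r" "0 \<le> r" by (cases R) auto
  have "ennreal (real n * D) = (\<Sum>k\<in>{1..n}. ennreal D)"
    using D by (simp add: ennreal_mult ennreal_of_nat_eq_real_of_nat)
  also have "\<dots> \<le> (\<Sum>k\<in>{1..n}. ennreal D * b k + R)"
    by (intro sum_mono B)
  also have "\<dots> = ennreal D * (\<Sum>k\<in>{1..n}. b k) + of_nat n * R"
    by (simp add: sum.distrib sum_distrib_left)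
  also have "\<dots> \<le> ennreal D * (\<Sum>k\<in>{1..n}. ennreal M * a k + ennreal q) + of_nat n * R"
    by (intro add_right_mono mult_left_mono sum_mono Cc) auto
  also have "\<dots> = ennreal M * (ennreal D * (\<Sum>k\<in>{1..n}. a k)) + of_nat n * ennreal (D * q) + of_nat n * R"
    using D q by (simp add: sum.distrib sum_distrib_left distrib_left ennreal_mult mult_ac)
  also have "\<dots> \<le> ennreal M * R + of_nat n * ennreal (D * q) + of_nat n * R"
    by (intro add_right_mono mult_left_mono A) auto
  also have "\<dots> = ennreal (M * r + real n * (D * q) + real n * r)"
    using r M D q by (simp add: ennreal_mult ennreal_plus ennreal_of_nat_eq_real_of_nat)
  finally have ineq: "real n * D \<le> M * r + real n * (D * q) + real n * r"
    using r M D q by (subst (asm) ennreal_le_iff) (auto intro!: add_nonneg_nonneg mult_nonneg_nonneg)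
  have np: "0 < real n + M" using n M by simp
  have "D * (1 - q) * real n \<le> r * (real n + M)" using ineq by (simp add: algebra_simps)
  hence "D * (1 - q) * real n / (real n + M) \<le> r" using np by (simp add: divide_le_eq)
  thus ?thesis using r by (simp add: ennreal_leI)
qed

abbreviation mu :: "real \<Rightarrow> real measure" where
  "mu \<gamma> \<equiv> density lborel (\<lambda>x. ennreal (p_gamma \<gamma> x))"

lemma sets_mu[simp, measurable_cong]: "sets (mu \<gamma>) = sets borel" by simp

lemma sets_noise: "sets (noise \<gamma> n) = sets (PiM {1..n} (\<lambda>_. (borel :: real measure)))"
  unfolding noise_def by (intro sets_PiM_cong) auto

lemma shift_meas:
  fixes n :: nat shows "Defs.shift n \<theta> \<in> noise \<gamma> n \<rightarrow>\<^sub>M PiM {1..n} (\<lambda>_. (borel :: real measure))"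
proof -
  have "Defs.shift n \<theta> \<in> PiM {1..n} (\<lambda>_. (borel :: real measure)) \<rightarrow>\<^sub>M PiM {1..n} (\<lambda>_. (borel :: real measure))"
    unfolding Defs.shift_def by measurable
  thus ?thesis by (simp add: measurable_cong_sets[OF sets_noise refl])
qed

lemma est_comp_meas:
  fixes n :: nat
  assumes est: "est \<in> PiM {1..n} (\<lambda>_. borel) \<rightarrow>\<^sub>M PiM {1..n} (\<lambda>_. (borel :: real measure))"
    and k: "k \<in> {1..n}"
  shows "(\<lambda>z. est (Defs.shift n \<theta> z) k) \<in> borel_measurable (noise \<gamma> n)"
proof -
  have "(\<lambda>z. est (Defs.shift n \<theta> z)) \<in> noise \<gamma> n \<rightarrow>\<^sub>M PiM {1..n} (\<lambda>_. (borel :: real measure))"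
    by (rule measurable_compose[OF shift_meas est])
  thus ?thesis by (rule measurable_compose[OF _ measurable_component_singleton[OF k]])
qed

lemma theta0_in: fixes n :: nat shows "(\<lambda>i\<in>{1..n}. (0::real)) \<in> Theta3 n"
  unfolding Theta3_def
proof (intro CollectI conjI restrict_extensional exI[of _ "\<lambda>j. if j = 0 then 0 else n"]
    exI[of _ "\<lambda>j. 0"] ballI)
  fix j i assume j: "j \<in> {1..(3::nat)}" and i: "i \<in> {(if j - 1 = 0 then 0 else n)<..(if j = 0 then 0 else n)}"
  thus "(\<lambda>i\<in>{1..n}. 0::real) i = 0" by auto
qed auto

lemma thetak_in:
  fixes n :: nat
  assumes k: "k \<in> {1..n}"
  shows "(\<lambda>i\<in>{1..n}. if i = k then \<delta> else (0::real)) \<in> Theta3 n"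
  unfolding Theta3_def
proof (intro CollectI conjI restrict_extensional exI[of _ "\<lambda>j. if j = 0 then 0 else if j = 1 then k - 1 else if j = 2 then k else n"]
    exI[of _ "\<lambda>j. if j = 2 then \<delta> else 0"] ballI)
  fix j i assume j: "j \<in> {1..(3::nat)}" and i: "i \<in> {(if j - 1 = 0 then 0 else if j - 1 = 1 then k - 1 else if j - 1 = 2 then k else n)<..(if j = 0 then 0 else if j = 1 then k - 1 else if j = 2 then k else n)}"
  have "j = 1 \<or> j = 2 \<or> j = 3" using j by auto
  thus "(\<lambda>i\<in>{1..n}. if i = k then \<delta> else 0) i = (if j = 2 then \<delta> else 0)"
    using i k by auto
qed (use k in auto)

lemma generic_lb:
  fixes n :: nat and \<gamma> \<delta> M q :: real
  assumes g: "0 < \<gamma>" and n: "1 \<le> n"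
    and est: "est \<in> PiM {1..n} (\<lambda>_. borel) \<rightarrow>\<^sub>M PiM {1..n} (\<lambda>_. (borel :: real measure))"
    and d: "0 < \<delta>" and M: "0 \<le> M" and q: "0 \<le> q"
    and one: "\<And>g. g \<in> borel_measurable (mu \<gamma>) \<Longrightarrow> (\<And>x. g x \<le> 1) \<Longrightarrow>
                 (\<integral>\<^sup>+y. g (y + \<delta>) \<partial>mu \<gamma>) \<le> ennreal M * (\<integral>\<^sup>+y. g y \<partial>mu \<gamma>) + ennreal q"
  shows "ennreal (\<delta>\<^sup>2 / 4 * (1 - q) * real n / (real n + M)) \<le> (SUP \<theta>\<in>Theta3 n. risk \<gamma> n est \<theta>)"
proof -
  define R where "R = (SUP \<theta>\<in>Theta3 n. risk \<gamma> n est \<theta>)"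
  define D where "D = \<delta>\<^sup>2 / 4"
  have D0: "0 \<le> D" unfolding D_def by simp
  define \<theta>0 where "\<theta>0 = (\<lambda>i\<in>{1..n}. (0::real))"
  define \<theta>k where "\<theta>k k = (\<lambda>i\<in>{1..n}. if i = k then \<delta> else (0::real))" for k
  define h where "h k x = (if \<delta> / 2 \<le> \<bar>est x k\<bar> then 1 else 0 :: ennreal)" for k x
  define a where "a k = (\<integral>\<^sup>+z. h k (Defs.shift n \<theta>0 z) \<partial>noise \<gamma> n)" for k
  define b where "b k = (\<integral>\<^sup>+z. h k (Defs.shift n (\<theta>k k) z) \<partial>noise \<gamma> n)" for k
  interpret N: prob_space "noise \<gamma> n" unfolding noise_def by (rule prob_space_PiM) (rule mu_prob[OF g])
  have hm: "(\<lambda>z. h k (Defs.shift n \<theta> z)) \<in> borel_measurable (noise \<gamma> n)" if k: "k \<in> {1..n}" for k \<theta>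
  proof -
    have [measurable]: "(\<lambda>z. est (Defs.shift n \<theta> z) k) \<in> borel_measurable (noise \<gamma> n)"
      by (rule est_comp_meas[OF est k])
    show ?thesis unfolding h_def by measurable
  qed
  have riskm: "(\<lambda>z. ennreal (\<Sum>i\<in>{1..n}. (est (Defs.shift n \<theta> z) i - \<theta> i)\<^sup>2)) \<in> borel_measurable (noise \<gamma> n)" for \<theta>
  proof -
    have [measurable]: "(\<lambda>z. est (Defs.shift n \<theta> z) i) \<in> borel_measurable (noise \<gamma> n)" if "i \<in> {1..n}" for i
      by (rule est_comp_meas[OF est that])
    show ?thesis by measurable
  qed
  have A: "ennreal D * (\<Sum>k\<in>{1..n}. a k) \<le> R"
  proof -
    have "ennreal D * (\<Sum>k\<in>{1..n}. a k) = (\<integral>\<^sup>+z. (\<Sum>k\<in>{1..n}. ennreal D * h k (Defs.shift n \<theta>0 z)) \<partial>noise \<gamma> n)"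
      unfolding a_def sum_distrib_left
    proof (subst nn_integral_sum)
      fix k assume "k \<in> {1..n}"
      thus "(\<lambda>z. ennreal D * h k (Defs.shift n \<theta>0 z)) \<in> borel_measurable (noise \<gamma> n)"
        using hm by measurable
    qed (use hm in \<open>auto simp: nn_integral_cmult\<close>)
    also have "\<dots> \<le> (\<integral>\<^sup>+z. ennreal (\<Sum>i\<in>{1..n}. (est (Defs.shift n \<theta>0 z) i - \<theta>0 i)\<^sup>2) \<partial>noise \<gamma> n)"
    proof (rule nn_integral_mono)
      fix z
      have "(\<Sum>k\<in>{1..n}. ennreal D * h k (Defs.shift n \<theta>0 z)) \<le> (\<Sum>k\<in>{1..n}. ennreal ((est (Defs.shift n \<theta>0 z) k - \<theta>0 k)\<^sup>2))"
      proof (rule sum_mono)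
        fix k assume k: "k \<in> {1..n}"
        show "ennreal D * h k (Defs.shift n \<theta>0 z) \<le> ennreal ((est (Defs.shift n \<theta>0 z) k - \<theta>0 k)\<^sup>2)"
        proof (cases "\<delta> / 2 \<le> \<bar>est (Defs.shift n \<theta>0 z) k\<bar>")
          case True
          have "(\<delta> / 2)\<^sup>2 \<le> (est (Defs.shift n \<theta>0 z) k)\<^sup>2"
            using True d by (metis abs_ge_zero abs_of_pos half_gt_zero power2_abs power_mono)
          thus ?thesis using True k unfolding h_def \<theta>0_def D_def by (auto intro!: ennreal_leI simp: power_divide)
        qed (simp add: h_def)
      qed
      also have "\<dots> = ennreal (\<Sum>i\<in>{1..n}. (est (Defs.shift n \<theta>0 z) i - \<theta>0 i)\<^sup>2)"
        by (rule sum_ennreal) simp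
      finally show "(\<Sum>k\<in>{1..n}. ennreal D * h k (Defs.shift n \<theta>0 z)) \<le> ennreal (\<Sum>i\<in>{1..n}. (est (Defs.shift n \<theta>0 z) i - \<theta>0 i)\<^sup>2)" .
    qed
    also have "\<dots> = risk \<gamma> n est \<theta>0" unfolding risk_def ..
    also have "\<dots> \<le> R" unfolding R_def \<theta>0_def by (rule SUP_upper) (rule theta0_in)
    finally show ?thesis .
  qed
  have B: "ennreal D \<le> ennreal D * b k + R" if k: "k \<in> {1..n}" for k
  proof -
    have "ennreal D = (\<integral>\<^sup>+z. ennreal D \<partial>noise \<gamma> n)" by (simp add: N.emeasure_space_1)
    also have "\<dots> \<le> (\<integral>\<^sup>+z. ennreal D * h k (Defs.shift n (\<theta>k k) z) + ennreal (\<Sum>i\<in>{1..n}. (est (Defs.shift n (\<theta>k k) z) i - \<theta>k k i)\<^sup>2) \<partial>noise \<gamma> n)"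
    proof (rule nn_integral_mono)
      fix z
      define x where "x = Defs.shift n (\<theta>k k) z"
      have tk: "\<theta>k k k = \<delta>" using k unfolding \<theta>k_def by simp
      have le: "(est x k - \<delta>)\<^sup>2 \<le> (\<Sum>i\<in>{1..n}. (est x i - \<theta>k k i)\<^sup>2)"
        using member_le_sum[of k "{1..n}" "\<lambda>i. (est x i - \<theta>k k i)\<^sup>2"] k tk by simp
      show "ennreal D \<le> ennreal D * h k x + ennreal (\<Sum>i\<in>{1..n}. (est x i - \<theta>k k i)\<^sup>2)"
      proof (cases "\<delta> / 2 \<le> \<bar>est x k\<bar>")
        case True thus ?thesis unfolding h_def by (simp add: add_increasing2)
      next
        case False
        hence "\<delta> / 2 \<le> \<bar>est x k - \<delta>\<bar>" by linarith
        hence "(\<delta> / 2)\<^sup>2 \<le> (est x k - \<delta>)\<^sup>2"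
          using d by (metis abs_ge_zero abs_of_pos half_gt_zero power2_abs power_mono)
        hence "D \<le> (\<Sum>i\<in>{1..n}. (est x i - \<theta>k k i)\<^sup>2)" using le unfolding D_def by (simp add: power_divide)
        thus ?thesis using False unfolding h_def by (simp add: ennreal_leI)
      qed
    qed
    also have "\<dots> = ennreal D * b k + risk \<gamma> n est (\<theta>k k)"
      unfolding b_def risk_def using hm[OF k] riskm
      by (subst nn_integral_add) (auto simp: nn_integral_cmult)
    also have "risk \<gamma> n est (\<theta>k k) \<le> R" unfolding R_def \<theta>k_def by (rule SUP_upper) (rule thetak_in[OF k])
    finally show ?thesis by (simp add: add_left_mono)
  qed
  have Cc: "b k \<le> ennreal M * a k + ennreal q" if k: "k \<in> {1..n}" for k
  proof -
    have eq: "Defs.shift n (\<theta>k k) z = Defs.shift n \<theta>0 (z(k := z k + \<delta>))" for z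
      unfolding Defs.shift_def \<theta>k_def \<theta>0_def by (auto simp: fun_eq_iff)
    have Hm: "(\<lambda>z. h k (Defs.shift n \<theta>0 z)) \<in> borel_measurable (PiM {1..n} (\<lambda>_. mu \<gamma>))"
      using hm[OF k] unfolding noise_def .
    have "b k = (\<integral>\<^sup>+z. h k (Defs.shift n \<theta>0 (z(k := z k + \<delta>))) \<partial>PiM {1..n} (\<lambda>_. mu \<gamma>))"
      unfolding b_def eq noise_def ..
    also have "\<dots> \<le> ennreal M * (\<integral>\<^sup>+z. h k (Defs.shift n \<theta>0 z) \<partial>PiM {1..n} (\<lambda>_. mu \<gamma>)) + ennreal q"
      by (rule prod_shift_bound[OF mu_prob[OF g] sets_mu _ k Hm _ one]) (auto simp: h_def)
    finally show ?thesis unfolding a_def noise_def .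
  qed
  have "ennreal (D * (1 - q) * real n / (real n + M)) \<le> R"
    by (rule core_arith[OF n D0 M q A B Cc])
  thus ?thesis unfolding R_def D_def .
qed

lemma case1:
  fixes n :: nat and \<gamma> :: real
  assumes g: "0 < \<gamma>" "\<gamma> \<le> 1" and n: "1 \<le> n"
    and est: "est \<in> PiM {1..n} (\<lambda>_. borel) \<rightarrow>\<^sub>M PiM {1..n} (\<lambda>_. (borel :: real measure))"
  shows "ennreal (ln (exp 1 * real n) powr (2 / \<gamma>) / (4 * (1 + exp 1))) \<le> (SUP \<theta>\<in>Theta3 n. risk \<gamma> n est \<theta>)"
proof -
  define L where "L = ln (exp 1 * real n)"
  have L1: "1 \<le> L" unfolding L_def using n by (simp add: ln_mult)
  define \<delta> where "\<delta> = L powr (1 / \<gamma>)"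
  have d: "0 < \<delta>" unfolding \<delta>_def using L1 by simp
  have dg: "\<delta> powr \<gamma> = L" unfolding \<delta>_def using L1 g by (simp add: powr_powr)
  have d2: "\<delta>\<^sup>2 = L powr (2 / \<gamma>)"
    unfolding \<delta>_def using L1 g by (simp add: powr_powr powr_realpow[symmetric])
  have eM: "exp (\<delta> powr \<gamma>) = exp 1 * real n" unfolding dg L_def using n by simp
  have one: "(\<integral>\<^sup>+y. g (y + \<delta>) \<partial>mu \<gamma>) \<le> ennreal (exp (\<delta> powr \<gamma>)) * (\<integral>\<^sup>+y. g y \<partial>mu \<gamma>) + ennreal 0"
    if gm: "g \<in> borel_measurable (mu \<gamma>)" and g1: "\<And>x. g x \<le> 1" for g
  proof -
    have gm': "g \<in> borel_measurable borel" using gm measurable_cong_sets[OF sets_mu[of \<gamma>] refl, of borel] by simp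
    have "(\<integral>\<^sup>+y. g (y + \<delta>) \<partial>mu \<gamma>) \<le> ennreal (exp (\<delta> powr \<gamma>)) * (\<integral>\<^sup>+y. g y \<partial>mu \<gamma>) + emeasure (mu \<gamma>) {}"
    proof (rule shift_bound[OF p_meas gm' _ g1])
      fix y show "p_gamma \<gamma> (y - \<delta>) \<le> exp (\<delta> powr \<gamma>) * p_gamma \<gamma> y + p_gamma \<gamma> (y - \<delta>) * indicator {} (y - \<delta>)"
        using ratio1[OF g less_imp_le[OF d], of y] by simp
    next
      fix x show "0 \<le> p_gamma \<gamma> x" by (rule p_nonneg[OF g(1)])
    qed auto
    thus ?thesis by simp
  qed
  have "ennreal (\<delta>\<^sup>2 / 4 * (1 - 0) * real n / (real n + exp (\<delta> powr \<gamma>))) \<le> (SUP \<theta>\<in>Theta3 n. risk \<gamma> n est \<theta>)"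
    by (rule generic_lb[OF g(1) n est d _ _ one]) auto
  also have "\<delta>\<^sup>2 / 4 * (1 - 0) * real n / (real n + exp (\<delta> powr \<gamma>)) = L powr (2 / \<gamma>) / (4 * (1 + exp 1))"
  proof -
    have np: "0 < real n" using n by simp
    have "real n + exp 1 * real n = real n * (1 + exp 1)" by (simp add: algebra_simps)
    thus ?thesis unfolding eM d2 using np by simp
  qed
  finally show ?thesis unfolding L_def .
qed

lemma case2:
  fixes n :: nat and \<gamma> :: real
  assumes g: "1 < \<gamma>" "\<gamma> \<le> 2" and n: "1 \<le> n"
    and est: "est \<in> PiM {1..n} (\<lambda>_. borel) \<rightarrow>\<^sub>M PiM {1..n} (\<lambda>_. (borel :: real measure))"
  shows "ennreal (ln (exp 1 * real n) powr (2 / \<gamma>) / (128 * (1 + exp 16385))) \<le> (SUP \<theta>\<in>Theta3 n. risk \<gamma> n est \<theta>)"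
proof -
  have g0: "0 < \<gamma>" using g by simp
  define L where "L = ln (exp 1 * real n)"
  have L1: "1 \<le> L" unfolding L_def using n by (simp add: ln_mult)
  define b where "b = (L / 4) powr (1 / \<gamma>)"
  define \<delta> where "\<delta> = max 64 b"
  have d64: "64 \<le> \<delta>" unfolding \<delta>_def by simp
  have d: "0 < \<delta>" using d64 by simp
  have bpos: "0 < b" unfolding b_def using L1 by simp
  define M where "M = exp ((2 * \<delta>) powr \<gamma>)"
  define q where "q = 4 * exp 1 / \<delta>"
  have q0: "0 \<le> q" unfolding q_def using d by simp
  have one: "(\<integral>\<^sup>+y. g (y + \<delta>) \<partial>mu \<gamma>) \<le> ennreal M * (\<integral>\<^sup>+y. g y \<partial>mu \<gamma>) + ennreal q"
    if gm: "g \<in> borel_measurable (mu \<gamma>)" and g1: "\<And>x. g x \<le> 1" for g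
  proof -
    have gm': "g \<in> borel_measurable borel" using gm measurable_cong_sets[OF sets_mu[of \<gamma>] refl, of borel] by simp
    have "(\<integral>\<^sup>+y. g (y + \<delta>) \<partial>mu \<gamma>) \<le> ennreal M * (\<integral>\<^sup>+y. g y \<partial>mu \<gamma>) + emeasure (mu \<gamma>) {t. \<delta> < \<bar>t\<bar>}"
    proof (rule shift_bound[OF p_meas gm' _ g1])
      fix y show "p_gamma \<gamma> (y - \<delta>) \<le> M * p_gamma \<gamma> y + p_gamma \<gamma> (y - \<delta>) * indicator {t. \<delta> < \<bar>t\<bar>} (y - \<delta>)"
      proof (cases "\<bar>y - \<delta>\<bar> \<le> \<delta>")
        case True
        have "p_gamma \<gamma> (y - \<delta>) \<le> M * p_gamma \<gamma> y"
          unfolding M_def by (rule ratio2[OF g0 less_imp_le[OF d] True])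
        moreover have "0 \<le> p_gamma \<gamma> (y - \<delta>) * indicator {t. \<delta> < \<bar>t\<bar>} (y - \<delta>)"
          using p_nonneg[OF g0] by simp
        ultimately show ?thesis by linarith
      next
        case False
        have "0 \<le> M * p_gamma \<gamma> y" unfolding M_def using p_nonneg[OF g0] by simp
        thus ?thesis using False by simp
      qed
    next
      fix x show "0 \<le> p_gamma \<gamma> x" by (rule p_nonneg[OF g0])
    qed (auto simp: M_def)
    also have "emeasure (mu \<gamma>) {t. \<delta> < \<bar>t\<bar>} \<le> ennreal q"
      unfolding q_def by (rule tail_mu) (use g d64 in auto)
    finally show ?thesis by (simp add: add_left_mono)
  qed
  have M0: "0 \<le> M" unfolding M_def by simp
  have main: "ennreal (\<delta>\<^sup>2 / 4 * (1 - q) * real n / (real n + M)) \<le> (SUP \<theta>\<in>Theta3 n. risk \<gamma> n est \<theta>)"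
    by (rule generic_lb[OF g0 n est d M0 q0 one])
  define K :: real where "K = exp 16385"
  have np: "0 < real n" using n by simp
  have q12: "1 / 2 \<le> 1 - q"
  proof -
    have "q \<le> 4 * 3 / 64" unfolding q_def using d64 exp_le
      by (intro frac_le) auto
    thus ?thesis by simp
  qed
  have MK: "M \<le> K * real n"
  proof -
    have "(2 * \<delta>) powr \<gamma> = 2 powr \<gamma> * \<delta> powr \<gamma>" using d by (simp add: powr_mult)
    also have "\<dots> \<le> 4 * \<delta> powr \<gamma>"
    proof -
      have "2 powr \<gamma> \<le> 2 powr (2::real)" using g by (intro powr_mono) auto
      thus ?thesis by (intro mult_right_mono) auto
    qed
    also have "\<delta> powr \<gamma> \<le> 4096 + L / 4"
    proof -
      have "64 powr \<gamma> \<le> 64 powr (2::real)" using g by (intro powr_mono) auto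
      hence a: "64 powr \<gamma> \<le> 4096" by simp
      have bb: "b powr \<gamma> = L / 4" unfolding b_def using L1 g by (simp add: powr_powr)
      have "\<delta> powr \<gamma> \<le> max (64 powr \<gamma>) (b powr \<gamma>)"
        unfolding \<delta>_def by (cases "64 \<le> b") (auto simp: max_def)
      thus ?thesis using a bb L1 by (simp add: max_def split: if_splits)
    qed
    hence "4 * \<delta> powr \<gamma> \<le> 16384 + L" by simp
    finally have "(2 * \<delta>) powr \<gamma> \<le> 16384 + L" .
    hence "M \<le> exp (16384 + L)" unfolding M_def by simp
    also have "\<dots> = exp 16384 * (exp 1 * real n)" unfolding L_def using np by (simp add: exp_add)
    also have "\<dots> = K * real n" unfolding K_def by (simp add: exp_add[symmetric] mult.assoc[symmetric])
    finally show ?thesis .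
  qed
  have K0: "0 < K" unfolding K_def by simp
  have frac: "1 / (1 + K) \<le> real n / (real n + M)"
  proof -
    have "real n + M \<le> real n * (1 + K)" using MK by (simp add: algebra_simps)
    thus ?thesis using np M0 K0 by (simp add: field_simps)
  qed
  have dd: "L powr (2 / \<gamma>) / 16 \<le> \<delta>\<^sup>2"
  proof -
    have "b\<^sup>2 = (L / 4) powr (2 / \<gamma>)"
      unfolding b_def using L1 g0 by (simp add: powr_powr powr_realpow[symmetric])
    also have "\<dots> = L powr (2 / \<gamma>) / 4 powr (2 / \<gamma>)" using L1 by (simp add: powr_divide)
    also have "\<dots> \<ge> L powr (2 / \<gamma>) / 16"
    proof -
      have "4 powr (2 / \<gamma>) \<le> 4 powr (2::real)" using g by (intro powr_mono) (auto simp: field_simps)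
      hence "4 powr (2 / \<gamma>) \<le> 16" by simp
      thus ?thesis by (intro divide_left_mono) auto
    qed
    finally have "L powr (2 / \<gamma>) / 16 \<le> b\<^sup>2" .
    also have "b\<^sup>2 \<le> \<delta>\<^sup>2" unfolding \<delta>_def using bpos by (intro power_mono) auto
    finally show ?thesis .
  qed
  have "L powr (2 / \<gamma>) / (128 * (1 + K)) = (L powr (2 / \<gamma>) / 16) / 4 * (1 / 2) * (1 / (1 + K))"
    by (simp add: field_simps)
  also have "\<dots> \<le> \<delta>\<^sup>2 / 4 * (1 - q) * (real n / (real n + M))"
    using dd q12 frac K0 by (intro mult_mono divide_right_mono) auto
  also have "\<dots> = \<delta>\<^sup>2 / 4 * (1 - q) * real n / (real n + M)" by simp
  finally have "ennreal (L powr (2 / \<gamma>) / (128 * (1 + K))) \<le> ennreal (\<delta>\<^sup>2 / 4 * (1 - q) * real n / (real n + M))"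
    by (rule ennreal_leI)
  also note main
  finally show ?thesis unfolding L_def K_def .
qed

theorem mainTheorem7:
  shows "\<exists>c > (0::real). \<forall>\<gamma> n est.
           0 < \<gamma> \<and> \<gamma> \<le> 2 \<and> 1 \<le> n \<and>
           est \<in> PiM {1..n} (\<lambda>_. borel) \<rightarrow>\<^sub>M PiM {1..n} (\<lambda>_. (borel :: real measure)) \<longrightarrow>
           (SUP \<theta>\<in>Theta3 n. risk \<gamma> n est \<theta>) \<ge> ennreal (c * (ln (exp 1 * real n)) powr (2 / \<gamma>))"
proof (intro exI[of _ "1 / (128 * (1 + exp 16385))"] conjI allI impI)
  show "0 < 1 / (128 * (1 + exp (16385::real)))" by (simp add: add_pos_pos)
  fix \<gamma> :: real and n :: nat and est :: "(nat \<Rightarrow> real) \<Rightarrow> nat \<Rightarrow> real"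
  assume H: "0 < \<gamma> \<and> \<gamma> \<le> 2 \<and> 1 \<le> n \<and>
           est \<in> PiM {1..n} (\<lambda>_. borel) \<rightarrow>\<^sub>M PiM {1..n} (\<lambda>_. (borel :: real measure))"
  hence g: "0 < \<gamma>" "\<gamma> \<le> 2" and n: "1 \<le> n"
    and est: "est \<in> PiM {1..n} (\<lambda>_. borel) \<rightarrow>\<^sub>M PiM {1..n} (\<lambda>_. (borel :: real measure))" by auto
  define L where "L = ln (exp 1 * real n) powr (2 / \<gamma>)"
  have L0: "0 \<le> L" unfolding L_def by simp
  have eq: "1 / (128 * (1 + exp 16385)) * ln (exp 1 * real n) powr (2 / \<gamma>) = L / (128 * (1 + exp 16385))"
    unfolding L_def by simp
  have key: "ennreal (L / (128 * (1 + exp 16385))) \<le> (SUP \<theta>\<in>Theta3 n. risk \<gamma> n est \<theta>)"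
  proof (cases "\<gamma> \<le> 1")
    case True
    have "L / (128 * (1 + exp 16385)) \<le> L / (4 * (1 + exp 1))"
    proof (rule divide_left_mono[OF _ L0])
      define E :: real where "E = exp 16385"
      have E: "exp 1 \<le> E" "0 < E" unfolding E_def by simp_all
      hence "4 * (1 + exp 1) \<le> 128 * (1 + E)" unfolding distrib_left by linarith
      thus "4 * (1 + exp 1) \<le> 128 * (1 + exp (16385::real))" unfolding E_def .
    qed (simp add: add_pos_pos)
    hence "ennreal (L / (128 * (1 + exp 16385))) \<le> ennreal (L / (4 * (1 + exp 1)))" by (rule ennreal_leI)
    also have "\<dots> \<le> (SUP \<theta>\<in>Theta3 n. risk \<gamma> n est \<theta>)"
      unfolding L_def by (rule case1[OF g(1) True n est])
    finally show ?thesis .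
  next
    case False
    show ?thesis unfolding L_def by (rule case2[OF _ g(2) n est]) (use False in simp)
  qed
  show "ennreal (1 / (128 * (1 + exp 16385)) * ln (exp 1 * real n) powr (2 / \<gamma>)) \<le> (SUP \<theta>\<in>Theta3 n. risk \<gamma> n est \<theta>)"
    unfolding eq by (rule key)
qed

end
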